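(* Let $v$ be a typical weight and let $X$ be an initial space such that for every $f\in X$ and $0\le r<1$ the function $f_r(z)=f(rz)$ is in $X$ and $\sup_{0\le r<1}\|f_r\|_X\le C\|f\|_X$ for a constant $C$ independent of $f$. Let $T$ be an intrinsic operator on $\mathcal{H}(\mathbb{D})$ such that $T:X\to H_v$ is bounded and $Tf_r\in H_{v,0}$ for all $f\in X$, $0\le r<1$. Then the following are equivalent: (i) $T:X\to H_v$ is compact; (ii) $T:X\to H_{v,0}$ is compact; (iii) $\lim_{|z|\to1}v(z)\|T^*K_z^H\|=0$.
   Context: $\mathcal{H}(\mathbb{D})$ is the space of holomorphic functions on the unit disk $\mathbb{D}$ with the topology $\tau_{uc}$ of uniform convergence on compact subsets. A linear operator $T$ on $\mathcal{H}(\mathbb{D})$ is intrinsic if it maps $\tau_{uc}$-convergent sequences to $\tau_{uc}$-convergent sequences. An initial space is a Banach space $X\subset\mathcal{H}(\mathbb{D})$ containing the polynomials such that every sequence in the closed unit ball of $X$ has a subsequence converging in $\tau_{uc}$ to some function in $X$. A typical weight is a continuous radial $v:\mathbb{D}\to(0,1]$, non-increasing in $|z|$, with $v(z)\to0$ as $|z|\to1$. $H_v=\{f:\sup_z v(z)|f(z)|<\infty\}$ with that supremum as norm, $H_{v,0}=\{f:\lim_{|z|\to1}v(z)|f(z)|=0\}$ (closed subspace). $K_z^H$ is the point evaluation $g\mapsto g(z)$ on $H_v$ and $T^*:H_v^*\to X^*$ the adjoint of $T:X\to H_v$. *)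

theory Defs
  imports "HOL-Analysis.Analysis" "HOL-Computational_Algebra.Polynomial"
begin

type_synonym cfun = "complex \<Rightarrow> complex"

text \<open>Elements of H(D) are represented canonically as functions holomorphic on the
open unit disk and equal to 0 outside of it (so that equality of elements of H(D)
is equality of HOL functions).\<close>

definition restrictD :: "cfun \<Rightarrow> cfun" where
  "restrictD f = (\<lambda>z. if cmod z < 1 then f z else 0)"

definition HD :: "cfun set" where
  "HD = {f. f holomorphic_on ball 0 1 \<and> (\<forall>z. 1 \<le> cmod z \<longrightarrow> f z = 0)}"

definition uc_conv :: "(nat \<Rightarrow> cfun) \<Rightarrow> cfun \<Rightarrow> bool" where
  "uc_conv fs f \<longleftrightarrow> (\<forall>K. compact K \<and> K \<subseteq> ball 0 1 \<longrightarrow> uniform_limit K fs f sequentially)"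

definition linear_on_HD :: "(cfun \<Rightarrow> cfun) \<Rightarrow> bool" where
  "linear_on_HD T \<longleftrightarrow> (\<forall>f\<in>HD. T f \<in> HD) \<and>
     (\<forall>f\<in>HD. \<forall>g\<in>HD. T (\<lambda>z. f z + g z) = (\<lambda>z. T f z + T g z)) \<and>
     (\<forall>f\<in>HD. \<forall>c::complex. T (\<lambda>z. c * f z) = (\<lambda>z. c * T f z))"

definition intrinsic :: "(cfun \<Rightarrow> cfun) \<Rightarrow> bool" where
  "intrinsic T \<longleftrightarrow> linear_on_HD T \<and>
     (\<forall>fs f. (\<forall>n. fs n \<in> HD) \<and> f \<in> HD \<and> uc_conv fs f \<longrightarrow>
        (\<exists>g\<in>HD. uc_conv (\<lambda>n. T (fs n)) g))"

definition banach_subspace :: "cfun set \<Rightarrow> (cfun \<Rightarrow> real) \<Rightarrow> bool" where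
  "banach_subspace X nX \<longleftrightarrow> X \<subseteq> HD \<and> (\<lambda>z. 0) \<in> X \<and>
     (\<forall>f\<in>X. \<forall>g\<in>X. (\<lambda>z. f z + g z) \<in> X) \<and>
     (\<forall>f\<in>X. \<forall>c::complex. (\<lambda>z. c * f z) \<in> X) \<and>
     (\<forall>f\<in>X. nX f \<ge> 0) \<and>
     (\<forall>f\<in>X. nX f = 0 \<longleftrightarrow> f = (\<lambda>z. 0)) \<and>
     (\<forall>f\<in>X. \<forall>c::complex. nX (\<lambda>z. c * f z) = cmod c * nX f) \<and>
     (\<forall>f\<in>X. \<forall>g\<in>X. nX (\<lambda>z. f z + g z) \<le> nX f + nX g) \<and>
     (\<forall>fs. (\<forall>n. fs n \<in> X) \<and>
        (\<forall>e>0. \<exists>N. \<forall>m\<ge>N. \<forall>n\<ge>N. nX (\<lambda>z. fs m z - fs n z) < e) \<longrightarrow>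
        (\<exists>f\<in>X. (\<lambda>n. nX (\<lambda>z. fs n z - f z)) \<longlonglongrightarrow> 0))"

definition initial_space :: "cfun set \<Rightarrow> (cfun \<Rightarrow> real) \<Rightarrow> bool" where
  "initial_space X nX \<longleftrightarrow> banach_subspace X nX \<and>
     (\<forall>p. restrictD (poly (p :: complex poly)) \<in> X) \<and>
     (\<forall>fs. (\<forall>n. fs n \<in> X \<and> nX (fs n) \<le> 1) \<longrightarrow>
        (\<exists>(\<sigma>::nat\<Rightarrow>nat) f. strict_mono \<sigma> \<and> f \<in> X \<and> uc_conv (fs \<circ> \<sigma>) f))"

definition tends0_bdry :: "(complex \<Rightarrow> real) \<Rightarrow> bool" where
  "tends0_bdry h \<longleftrightarrow> (\<forall>e>0. \<exists>r<1. \<forall>z. r < cmod z \<and> cmod z < 1 \<longrightarrow> \<bar>h z\<bar> < e)"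

definition typical_weight :: "(complex \<Rightarrow> real) \<Rightarrow> bool" where
  "typical_weight v \<longleftrightarrow> continuous_on (ball 0 1) v \<and>
     (\<forall>z\<in>ball 0 1. 0 < v z \<and> v z \<le> 1) \<and>
     (\<forall>z\<in>ball 0 1. \<forall>w\<in>ball 0 1. cmod z \<le> cmod w \<longrightarrow> v w \<le> v z) \<and>
     tends0_bdry v"

definition Hv :: "(complex \<Rightarrow> real) \<Rightarrow> cfun set" where
  "Hv v = {f\<in>HD. bdd_above ((\<lambda>z. v z * cmod (f z)) ` ball 0 1)}"

definition normv :: "(complex \<Rightarrow> real) \<Rightarrow> cfun \<Rightarrow> real" where
  "normv v f = (SUP z\<in>ball 0 1. v z * cmod (f z))"

definition Hv0 :: "(complex \<Rightarrow> real) \<Rightarrow> cfun set" where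
  "Hv0 v = {f\<in>Hv v. tends0_bdry (\<lambda>z. v z * cmod (f z))}"

definition dil :: "real \<Rightarrow> cfun \<Rightarrow> cfun" where
  "dil r f = restrictD (\<lambda>z. f (complex_of_real r * z))"

definition bounded_op :: "cfun set \<Rightarrow> (cfun \<Rightarrow> real) \<Rightarrow> cfun set \<Rightarrow> (cfun \<Rightarrow> real)
    \<Rightarrow> (cfun \<Rightarrow> cfun) \<Rightarrow> bool" where
  "bounded_op X nX Y nY T \<longleftrightarrow> (\<forall>f\<in>X. T f \<in> Y) \<and> (\<exists>M. \<forall>f\<in>X. nY (T f) \<le> M * nX f)"

definition compact_op :: "cfun set \<Rightarrow> (cfun \<Rightarrow> real) \<Rightarrow> cfun set \<Rightarrow> (cfun \<Rightarrow> real)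
    \<Rightarrow> (cfun \<Rightarrow> cfun) \<Rightarrow> bool" where
  "compact_op X nX Y nY T \<longleftrightarrow> (\<forall>f\<in>X. T f \<in> Y) \<and>
     (\<forall>fs. (\<forall>n. fs n \<in> X \<and> nX (fs n) \<le> 1) \<longrightarrow>
        (\<exists>(\<sigma>::nat\<Rightarrow>nat) g. strict_mono \<sigma> \<and> g \<in> Y \<and> (\<lambda>n. nY (\<lambda>z. T (fs (\<sigma> n)) z - g z)) \<longlonglongrightarrow> 0))"

definition point_eval :: "complex \<Rightarrow> cfun \<Rightarrow> complex" where
  "point_eval z = (\<lambda>g. g z)"

definition adjoint_op :: "(cfun \<Rightarrow> cfun) \<Rightarrow> (cfun \<Rightarrow> complex) \<Rightarrow> (cfun \<Rightarrow> complex)" where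
  "adjoint_op T \<phi> = \<phi> \<circ> T"

definition dual_norm :: "cfun set \<Rightarrow> (cfun \<Rightarrow> real) \<Rightarrow> (cfun \<Rightarrow> complex) \<Rightarrow> real" where
  "dual_norm X nX \<phi> = (SUP f\<in>{f\<in>X. nX f \<le> 1}. cmod (\<phi> f))"

end

theory Submission
  imports Defs
begin
lemma HD_zero: "(\<lambda>z. 0) \<in> HD"
  by (simp add: HD_def holomorphic_on_const)

lemma HD_add: "f \<in> HD \<Longrightarrow> g \<in> HD \<Longrightarrow> (\<lambda>z. f z + g z) \<in> HD"
  by (auto simp: HD_def intro!: holomorphic_intros)

lemma HD_scale: "f \<in> HD \<Longrightarrow> (\<lambda>z. c * f z) \<in> HD"
  by (auto simp: HD_def intro!: holomorphic_intros)

lemma HD_diff: "f \<in> HD \<Longrightarrow> g \<in> HD \<Longrightarrow> (\<lambda>z. f z - g z) \<in> HD"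
  by (auto simp: HD_def intro!: holomorphic_intros)

lemma T_in: "intrinsic T \<Longrightarrow> f \<in> HD \<Longrightarrow> T f \<in> HD"
  by (simp add: intrinsic_def linear_on_HD_def)

lemma T_scale: "intrinsic T \<Longrightarrow> f \<in> HD \<Longrightarrow> T (\<lambda>z. c * f z) = (\<lambda>z. c * T f z)"
  by (simp add: intrinsic_def linear_on_HD_def)

lemma T_add: "intrinsic T \<Longrightarrow> f \<in> HD \<Longrightarrow> g \<in> HD \<Longrightarrow> T (\<lambda>z. f z + g z) = (\<lambda>z. T f z + T g z)"
  by (simp add: intrinsic_def linear_on_HD_def)

lemma T_zero: "intrinsic T \<Longrightarrow> T (\<lambda>z. 0) = (\<lambda>z. 0)"
  using T_scale[of T "\<lambda>z. 0" 0] HD_zero by simp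

lemma T_diff: "intrinsic T \<Longrightarrow> f \<in> HD \<Longrightarrow> g \<in> HD \<Longrightarrow> T (\<lambda>z. f z - g z) = (\<lambda>z. T f z - T g z)"
proof -
  assume a: "intrinsic T" "f \<in> HD" "g \<in> HD"
  have e1: "T (\<lambda>z. f z + (-1) * g z) = (\<lambda>z. T f z + T (\<lambda>z. (-1) * g z) z)"
    by (rule T_add[OF a(1,2) HD_scale[OF a(3)]])
  have e2: "T (\<lambda>z. (-1) * g z) = (\<lambda>z. (-1) * T g z)" by (rule T_scale[OF a(1,3)])
  have e3: "(\<lambda>z. f z - g z) = (\<lambda>z. f z + (-1) * g z)" by simp
  show ?thesis unfolding e3 e1 e2 by simp
qed

lemma T_cont0:
  assumes T: "intrinsic T" and hs: "\<And>n. hs n \<in> HD" and c: "uc_conv hs (\<lambda>z. 0)"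
  shows "uc_conv (\<lambda>n. T (hs n)) (\<lambda>z. 0)"
proof -
  define k where "k n = (if even n then hs (n div 2) else (\<lambda>z. 0))" for n
  have kHD: "\<forall>n. k n \<in> HD" using hs HD_zero by (simp add: k_def)
  have kc: "uc_conv k (\<lambda>z. 0)"
    unfolding uc_conv_def
  proof (intro allI impI)
    fix K :: "complex set" assume K: "compact K \<and> K \<subseteq> ball 0 1"
    have ulh: "uniform_limit K hs (\<lambda>z. 0) sequentially" using c K by (simp add: uc_conv_def)
    show "uniform_limit K k (\<lambda>z. 0) sequentially"
    proof (rule uniform_limitI)
      fix e :: real assume e: "e > 0"
      from uniform_limitD[OF ulh e] obtain N where N: "\<And>n. n \<ge> N \<Longrightarrow> \<forall>x\<in>K. dist (hs n x) 0 < e"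
        unfolding eventually_sequentially by blast
      have "\<forall>n\<ge>2*N. \<forall>x\<in>K. dist (k n x) 0 < e"
      proof (intro allI impI ballI)
        fix n x assume n: "n \<ge> 2*N" and x: "x \<in> K"
        show "dist (k n x) 0 < e"
        proof (cases "even n")
          case True
          have "n div 2 \<ge> N" using n by linarith
          with N x True show ?thesis by (simp add: k_def)
        next
          case False
          with e show ?thesis by (simp add: k_def)
        qed
      qed
      then show "\<forall>\<^sub>F n in sequentially. \<forall>x\<in>K. dist (k n x) ((\<lambda>z. 0) x) < e"
        unfolding eventually_sequentially by auto
    qed
  qed
  have ic: "\<And>fs f. (\<forall>n. fs n \<in> HD) \<and> f \<in> HD \<and> uc_conv fs f \<Longrightarrow> \<exists>g\<in>HD. uc_conv (\<lambda>n. T (fs n)) g"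
    using T unfolding intrinsic_def by blast
  from ic[of k "\<lambda>z. 0"] kHD kc HD_zero obtain g where g: "g \<in> HD" "uc_conv (\<lambda>n. T (k n)) g"
    by auto
  show ?thesis
    unfolding uc_conv_def
  proof (intro allI impI)
    fix K :: "complex set" assume K: "compact K \<and> K \<subseteq> ball 0 1"
    have ul: "uniform_limit K (\<lambda>n. T (k n)) g sequentially" using g K by (simp add: uc_conv_def)
    have g0: "g x = 0" if x: "x \<in> K" for x
    proof (rule ccontr)
      assume "g x \<noteq> 0"
      then have e: "dist 0 (g x) > 0" by simp
      from uniform_limitD[OF ul e] obtain N where N0: "\<forall>n\<ge>N. \<forall>y\<in>K. dist (T (k n) y) (g y) < dist 0 (g x)"
        unfolding eventually_sequentially by blast
      have N: "\<And>n. n \<ge> N \<Longrightarrow> \<forall>y\<in>K. dist (T (k n) y) (g y) < dist 0 (g x)" using N0 by blast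
      have "T (k (2*N+1)) = (\<lambda>z. 0)" using T_zero[OF T] by (simp add: k_def)
      moreover have "2*N+1 \<ge> N" by simp
      ultimately show False using N[of "2*N+1"] x by auto
    qed
    show "uniform_limit K (\<lambda>n. T (hs n)) (\<lambda>z. 0) sequentially"
    proof (rule uniform_limitI)
      fix e :: real assume e: "e > 0"
      from uniform_limitD[OF ul e] obtain N where N: "\<And>n. n \<ge> N \<Longrightarrow> \<forall>x\<in>K. dist (T (k n) x) (g x) < e"
        unfolding eventually_sequentially by blast
      have "\<forall>n\<ge>N. \<forall>x\<in>K. dist (T (hs n) x) 0 < e"
      proof (intro allI impI ballI)
        fix n x assume n: "n \<ge> N" and x: "x \<in> K"
        have "k (2*n) = hs n" by (simp add: k_def)
        moreover have "2*n \<ge> N" using n by simp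
        ultimately show "dist (T (hs n) x) 0 < e" using N[of "2*n"] x g0[OF x] by auto
      qed
      then show "\<forall>\<^sub>F n in sequentially. \<forall>x\<in>K. dist (T (hs n) x) ((\<lambda>z. 0) x) < e"
        unfolding eventually_sequentially by auto
    qed
  qed
qed

lemma T_cont:
  assumes T: "intrinsic T" and fs: "\<And>n. fs n \<in> HD" and f: "f \<in> HD" and c: "uc_conv fs f"
  shows "uc_conv (\<lambda>n. T (fs n)) (T f)"
proof -
  define hs where "hs n = (\<lambda>z. fs n z - f z)" for n
  have hs: "\<And>n. hs n \<in> HD" using fs f HD_diff by (simp add: hs_def)
  have "uc_conv hs (\<lambda>z. 0)"
    unfolding uc_conv_def
  proof (intro allI impI)
    fix K :: "complex set" assume K: "compact K \<and> K \<subseteq> ball 0 1"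
    have "uniform_limit K fs f sequentially" using c K by (simp add: uc_conv_def)
    then show "uniform_limit K hs (\<lambda>z. 0) sequentially"
      unfolding uniform_limit_iff hs_def by (simp add: dist_norm)
  qed
  from T_cont0[OF T hs this] have u: "uc_conv (\<lambda>n. T (hs n)) (\<lambda>z. 0)" .
  have Th: "T (hs n) = (\<lambda>z. T (fs n) z - T f z)" for n
    unfolding hs_def using T_diff[OF T fs f] .
  show ?thesis
    unfolding uc_conv_def
  proof (intro allI impI)
    fix K :: "complex set" assume K: "compact K \<and> K \<subseteq> ball 0 1"
    have "uniform_limit K (\<lambda>n. T (hs n)) (\<lambda>z. 0) sequentially" using u K by (simp add: uc_conv_def)
    then show "uniform_limit K (\<lambda>n. T (fs n)) (T f) sequentially"
      unfolding uniform_limit_iff Th by (simp add: dist_norm)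
  qed
qed

lemma Hv_le: "h \<in> Hv v \<Longrightarrow> z \<in> ball 0 1 \<Longrightarrow> v z * cmod (h z) \<le> normv v h"
proof -
  assume h: "h \<in> Hv v" and z: "z \<in> ball 0 1"
  from h have "bdd_above ((\<lambda>z. v z * cmod (h z)) ` ball 0 1)" by (simp add: Hv_def)
  from cSUP_upper[OF z this] show ?thesis by (simp add: normv_def)
qed

lemma normv_le: "(\<And>z. z \<in> ball 0 1 \<Longrightarrow> v z * cmod (h z) \<le> B) \<Longrightarrow> normv v h \<le> B"
  unfolding normv_def by (rule cSUP_least) auto

lemma normv_nonneg: "\<forall>z\<in>ball 0 1. 0 \<le> v z \<Longrightarrow> h \<in> Hv v \<Longrightarrow> 0 \<le> normv v h"
proof -
  assume vp: "\<forall>z\<in>ball 0 1. 0 \<le> v z" and h: "h \<in> Hv v"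
  have z: "(0::complex) \<in> ball 0 1" by simp
  have "0 \<le> v 0 * cmod (h 0)" using vp z by simp
  also have "\<dots> \<le> normv v h" by (rule Hv_le[OF h z])
  finally show ?thesis .
qed

lemma Hv_diff:
  assumes vp: "\<forall>z\<in>ball 0 1. 0 \<le> v z" and f: "f \<in> Hv v" and g: "g \<in> Hv v"
  shows "(\<lambda>z. f z - g z) \<in> Hv v"
proof -
  from f obtain A where A: "\<forall>z\<in>ball 0 1. v z * cmod (f z) \<le> A"
    unfolding Hv_def bdd_above_def by auto
  from g obtain B where B: "\<forall>z\<in>ball 0 1. v z * cmod (g z) \<le> B"
    unfolding Hv_def bdd_above_def by auto
  have bnd: "v z * cmod (f z - g z) \<le> A + B" if z: "z \<in> ball 0 1" for z
  proof -
    have "cmod (f z - g z) \<le> cmod (f z) + cmod (g z)" by (rule norm_triangle_ineq4)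
    then have "v z * cmod (f z - g z) \<le> v z * cmod (f z) + v z * cmod (g z)"
      using vp z by (metis distrib_left mult_left_mono)
    moreover have "v z * cmod (f z) \<le> A" using A z by blast
    moreover have "v z * cmod (g z) \<le> B" using B z by blast
    ultimately show ?thesis by linarith
  qed
  have hd: "(\<lambda>z. f z - g z) \<in> HD" using f g HD_diff by (simp add: Hv_def)
  show ?thesis using hd bnd by (auto simp: Hv_def bdd_above_def intro!: exI[of _ "A+B"])
qed

lemma Hv0_closed:
  assumes vp: "\<forall>z\<in>ball 0 1. 0 \<le> v z" and F: "\<forall>n. F n \<in> Hv0 v" and g: "g \<in> Hv v"
    and lim: "(\<lambda>n. normv v (\<lambda>z. F n z - g z)) \<longlonglongrightarrow> 0"
  shows "g \<in> Hv0 v"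
proof -
  have "tends0_bdry (\<lambda>z. v z * cmod (g z))" unfolding tends0_bdry_def
  proof (intro allI impI)
    fix e :: real assume e: "e > 0"
    then have e2: "e/2 > 0" by simp
    from lim[unfolded LIMSEQ_iff, rule_format, OF e2] obtain no
      where no: "\<forall>n\<ge>no. norm (normv v (\<lambda>z. F n z - g z) - 0) < e/2" by blast
    then have n: "normv v (\<lambda>z. F no z - g z) < e/2" by auto
    have Fn: "F no \<in> Hv v" "tends0_bdry (\<lambda>z. v z * cmod (F no z))" using F by (auto simp: Hv0_def)
    from Fn(2)[unfolded tends0_bdry_def, rule_format, OF e2] obtain r
      where r: "r < 1" "\<forall>z. r < cmod z \<and> cmod z < 1 \<longrightarrow> \<bar>v z * cmod (F no z)\<bar> < e/2" by blast
    show "\<exists>r<1. \<forall>z. r < cmod z \<and> cmod z < 1 \<longrightarrow> \<bar>v z * cmod (g z)\<bar> < e"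
    proof (intro exI[of _ r] conjI allI impI)
      fix z assume z: "r < cmod z \<and> cmod z < 1"
      then have zb: "z \<in> ball 0 1" by simp
      have vz0: "0 \<le> v z" using vp zb by blast
      have d: "v z * cmod (F no z - g z) \<le> normv v (\<lambda>z. F no z - g z)"
        using Hv_le[OF Hv_diff[OF vp Fn(1) g] zb] by simp
      have "cmod (g z) = cmod (F no z - (F no z - g z))" by simp
      also have "\<dots> \<le> cmod (F no z) + cmod (F no z - g z)" by (rule norm_triangle_ineq4)
      finally have le: "cmod (g z) \<le> cmod (F no z) + cmod (F no z - g z)" .
      have "v z * cmod (g z) \<le> v z * (cmod (F no z) + cmod (F no z - g z))"
        using mult_left_mono[OF le vz0] .
      also have "\<dots> = v z * cmod (F no z) + v z * cmod (F no z - g z)" by (simp add: distrib_left)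
      finally have l1: "v z * cmod (g z) \<le> v z * cmod (F no z) + v z * cmod (F no z - g z)" .
      have "\<bar>v z * cmod (F no z)\<bar> < e/2" using r(2) z by blast
      then have l2: "v z * cmod (F no z) < e/2" using abs_ge_self[of "v z * cmod (F no z)"] by linarith
      have l3: "0 \<le> v z * cmod (g z)" using vz0 by simp
      show "\<bar>v z * cmod (g z)\<bar> < e" using l1 l2 l3 d n by linarith
    qed (rule r(1))
  qed
  with g show ?thesis by (simp add: Hv0_def)
qed

lemma norm_ptwise:
  assumes vp: "\<forall>z\<in>ball 0 1. 0 \<le> v z" and F: "\<forall>n. F n \<in> Hv v" and g: "g \<in> Hv v"
    and lim: "(\<lambda>n. normv v (\<lambda>z. F n z - g z)) \<longlonglongrightarrow> 0"
    and z: "z \<in> ball 0 1" and vz: "v z > 0"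
  shows "(\<lambda>n. F n z) \<longlonglongrightarrow> g z"
proof -
  have le: "\<forall>n. norm (F n z - g z) \<le> normv v (\<lambda>z. F n z - g z) / v z"
  proof
    fix n
    have "v z * cmod (F n z - g z) \<le> normv v (\<lambda>z. F n z - g z)"
      using Hv_le[OF Hv_diff[OF vp F[rule_format, of n] g] z] by simp
    then show "norm (F n z - g z) \<le> normv v (\<lambda>z. F n z - g z) / v z"
      using vz by (simp add: pos_le_divide_eq mult.commute)
  qed
  have l2: "(\<lambda>n. normv v (\<lambda>z. F n z - g z) / v z) \<longlonglongrightarrow> 0"
    using tendsto_divide_zero[OF lim] by simp
  have "(\<lambda>n. F n z - g z) \<longlonglongrightarrow> 0"
    by (rule Lim_null_comparison[OF always_eventually[OF le] l2])
  then show ?thesis by (rule LIM_zero_cancel)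
qed

lemma Hv0_scale:
  assumes vp: "\<forall>z\<in>ball 0 1. 0 \<le> v z" and h: "h \<in> Hv0 v"
  shows "(\<lambda>z. c * h z) \<in> Hv0 v"
proof -
  from h obtain A where A: "\<forall>z\<in>ball 0 1. v z * cmod (h z) \<le> A"
    unfolding Hv0_def Hv_def bdd_above_def by auto
  have bnd: "v z * cmod (c * h z) \<le> cmod c * A" if z: "z \<in> ball 0 1" for z
  proof -
    have "v z * cmod (c * h z) = cmod c * (v z * cmod (h z))" by (simp add: norm_mult)
    also have "\<dots> \<le> cmod c * A" using A z by (simp add: mult_left_mono)
    finally show ?thesis .
  qed
  have hd: "(\<lambda>z. c * h z) \<in> HD" using h HD_scale by (simp add: Hv0_def Hv_def)
  have hv: "(\<lambda>z. c * h z) \<in> Hv v"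
    using hd bnd by (auto simp: Hv_def bdd_above_def intro!: exI[of _ "cmod c * A"])
  have "tends0_bdry (\<lambda>z. v z * cmod (c * h z))" unfolding tends0_bdry_def
  proof (intro allI impI)
    fix e :: real assume e: "e > 0"
    have cp: "cmod c + 1 > 0" by (simp add: add_nonneg_pos)
    then have e': "e / (cmod c + 1) > 0" using e by simp
    have ht: "tends0_bdry (\<lambda>z. v z * cmod (h z))" using h by (simp add: Hv0_def)
    from ht[unfolded tends0_bdry_def, rule_format, OF e'] obtain r
      where r: "r < 1" "\<forall>z. r < cmod z \<and> cmod z < 1 \<longrightarrow> \<bar>v z * cmod (h z)\<bar> < e / (cmod c + 1)"
      by blast
    show "\<exists>r<1. \<forall>z. r < cmod z \<and> cmod z < 1 \<longrightarrow> \<bar>v z * cmod (c * h z)\<bar> < e"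
    proof (intro exI[of _ r] conjI allI impI)
      fix z assume z: "r < cmod z \<and> cmod z < 1"
      then have zb: "z \<in> ball 0 1" by simp
      define a where "a = v z * cmod (h z)"
      have a0: "0 \<le> a" using vp zb by (simp add: a_def)
      have "\<bar>a\<bar> < e / (cmod c + 1)" using r(2) z by (simp add: a_def)
      then have "a < e / (cmod c + 1)" using a0 by simp
      then have a: "a * (cmod c + 1) < e" using cp by (simp add: pos_less_divide_eq)
      have eqa: "v z * cmod (c * h z) = cmod c * a" by (simp add: norm_mult a_def)
      have "\<bar>v z * cmod (c * h z)\<bar> = cmod c * a" using eqa a0 by simp
      also have "\<dots> \<le> a * (cmod c + 1)" using a0 by (simp add: algebra_simps)
      finally show "\<bar>v z * cmod (c * h z)\<bar> < e" using a by linarith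
    qed (rule r(1))
  qed
  with hv show ?thesis by (simp add: Hv0_def)
qed

locale thm_ctx =
  fixes v :: "complex \<Rightarrow> real" and X :: "cfun set" and nX :: "cfun \<Rightarrow> real"
    and T :: "cfun \<Rightarrow> cfun" and C :: real
  assumes tw: "typical_weight v"
    and init: "initial_space X nX"
    and dilA: "\<forall>f\<in>X. \<forall>r. 0 \<le> r \<and> r < 1 \<longrightarrow> dil r f \<in> X \<and> nX (dil r f) \<le> C * nX f"
    and intr: "intrinsic T"
    and bnd: "bounded_op X nX (Hv v) (normv v) T"
    and dil0: "\<forall>f\<in>X. \<forall>r. 0 \<le> r \<and> r < 1 \<longrightarrow> T (dil r f) \<in> Hv0 v"

context thm_ctx
begin

lemma vpos: "z \<in> ball 0 1 \<Longrightarrow> 0 < v z"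
  using tw by (simp add: typical_weight_def)

lemma vle1: "z \<in> ball 0 1 \<Longrightarrow> v z \<le> 1"
  using tw by (simp add: typical_weight_def)

lemma vp: "\<forall>z\<in>ball 0 1. 0 \<le> v z"
  using vpos less_imp_le by blast

lemma bs: "banach_subspace X nX"
  using init by (simp add: initial_space_def)

lemma XHD: "f \<in> X \<Longrightarrow> f \<in> HD"
  using bs by (auto simp: banach_subspace_def)

lemma X0: "(\<lambda>z. 0) \<in> X"
  using bs by (simp add: banach_subspace_def)

lemma nXnn: "f \<in> X \<Longrightarrow> 0 \<le> nX f"
  using bs by (simp add: banach_subspace_def)

lemma nX0: "nX (\<lambda>z. 0) = 0"
  using bs X0 by (simp add: banach_subspace_def)

lemma nX_zero: "f \<in> X \<Longrightarrow> nX f = 0 \<Longrightarrow> f = (\<lambda>z. 0)"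
  using bs by (simp add: banach_subspace_def)

lemma Xscale: "f \<in> X \<Longrightarrow> (\<lambda>z. c * f z) \<in> X"
  using bs by (simp add: banach_subspace_def)

lemma nXscale: "f \<in> X \<Longrightarrow> nX (\<lambda>z. c * f z) = cmod c * nX f"
  using bs by (simp add: banach_subspace_def)

lemma Xadd: "f \<in> X \<Longrightarrow> g \<in> X \<Longrightarrow> (\<lambda>z. f z + g z) \<in> X"
  using bs by (simp add: banach_subspace_def)

lemma nXadd: "f \<in> X \<Longrightarrow> g \<in> X \<Longrightarrow> nX (\<lambda>z. f z + g z) \<le> nX f + nX g"
  using bs by (simp add: banach_subspace_def)

lemma Xdiff: assumes f: "f \<in> X" and g: "g \<in> X"
  shows "(\<lambda>z. f z - g z) \<in> X" "nX (\<lambda>z. f z - g z) \<le> nX f + nX g"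
proof -
  have e: "(\<lambda>z. f z - g z) = (\<lambda>z. f z + (\<lambda>z. (-1) * g z) z)" by simp
  have g': "(\<lambda>z. (-1) * g z) \<in> X" by (rule Xscale[OF g])
  show "(\<lambda>z. f z - g z) \<in> X" unfolding e by (rule Xadd[OF f g'])
  have "nX (\<lambda>z. f z + (\<lambda>z. (-1) * g z) z) \<le> nX f + nX (\<lambda>z. (-1) * g z)" by (rule nXadd[OF f g'])
  also have "nX (\<lambda>z. (-1) * g z) = nX g" using nXscale[OF g, of "-1"] by simp
  finally show "nX (\<lambda>z. f z - g z) \<le> nX f + nX g" unfolding e .
qed

lemma TXHv: "f \<in> X \<Longrightarrow> T f \<in> Hv v"
  using bnd by (simp add: bounded_op_def)

lemma Mb: "\<exists>M>0. \<forall>f\<in>X. normv v (T f) \<le> M * nX f"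
proof -
  from bnd obtain M where M: "\<forall>f\<in>X. normv v (T f) \<le> M * nX f" by (auto simp: bounded_op_def)
  have "\<forall>f\<in>X. normv v (T f) \<le> max M 1 * nX f"
  proof
    fix f assume f: "f \<in> X"
    have "M * nX f \<le> max M 1 * nX f" using nXnn[OF f] by (simp add: mult_right_mono)
    with M f show "normv v (T f) \<le> max M 1 * nX f" by force
  qed
  moreover have "max M 1 > 0" by simp
  ultimately show ?thesis by blast
qed

lemma DN_eq: "dual_norm X nX (adjoint_op T (point_eval z)) = (SUP f\<in>{f\<in>X. nX f \<le> 1}. cmod (T f z))"
  by (simp add: dual_norm_def adjoint_op_def point_eval_def)

lemma DN_bdd: assumes z: "z \<in> ball 0 1"
  shows "bdd_above ((\<lambda>f. cmod (T f z)) ` {f\<in>X. nX f \<le> 1})"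
proof -
  from Mb obtain M where M: "M > 0" "\<forall>f\<in>X. normv v (T f) \<le> M * nX f" by blast
  show ?thesis
  proof (rule bdd_aboveI2)
    fix f assume f: "f \<in> {f\<in>X. nX f \<le> 1}"
    then have fX: "f \<in> X" and f1: "nX f \<le> 1" by auto
    have "v z * cmod (T f z) \<le> normv v (T f)" by (rule Hv_le[OF TXHv[OF fX] z])
    also have "\<dots> \<le> M * nX f" using M fX by blast
    also have "\<dots> \<le> M" using M(1) f1 by (simp add: mult_left_le)
    finally have "v z * cmod (T f z) \<le> M" .
    then show "cmod (T f z) \<le> M / v z" using vpos[OF z] by (simp add: pos_le_divide_eq mult.commute)
  qed
qed

lemma DN_upper: "f \<in> X \<Longrightarrow> nX f \<le> 1 \<Longrightarrow> z \<in> ball 0 1 \<Longrightarrow>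
    cmod (T f z) \<le> dual_norm X nX (adjoint_op T (point_eval z))"
  unfolding DN_eq by (rule cSUP_upper[OF _ DN_bdd]) auto

lemma DN_nonneg: "z \<in> ball 0 1 \<Longrightarrow> 0 \<le> dual_norm X nX (adjoint_op T (point_eval z))"
proof -
  assume z: "z \<in> ball 0 1"
  have "cmod (T (\<lambda>z. 0) z) \<le> dual_norm X nX (adjoint_op T (point_eval z))"
    using DN_upper[OF X0 _ z] nX0 by simp
  then show ?thesis using norm_ge_zero order_trans by blast
qed

lemma DN_ex: assumes z: "z \<in> ball 0 1" and y: "y < dual_norm X nX (adjoint_op T (point_eval z))"
  shows "\<exists>f. f \<in> X \<and> nX f \<le> 1 \<and> y < cmod (T f z)"
proof -
  have ne: "{f\<in>X. nX f \<le> 1} \<noteq> {}" using X0 nX0 by auto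
  from y[unfolded DN_eq] less_cSUP_iff[OF ne DN_bdd[OF z]] show ?thesis by auto
qed

lemma DN_est: assumes f: "f \<in> X" and z: "z \<in> ball 0 1"
  shows "cmod (T f z) \<le> dual_norm X nX (adjoint_op T (point_eval z)) * nX f"
proof (cases "nX f = 0")
  case True
  then have "f = (\<lambda>z. 0)" by (rule nX_zero[OF f])
  then have "T f = (\<lambda>z. 0)" using T_zero[OF intr] by simp
  then show ?thesis using DN_nonneg[OF z] True by simp
next
  case False
  define n where "n = nX f"
  have n: "n > 0" using False nXnn[OF f] by (simp add: n_def)
  define g where "g = (\<lambda>w. complex_of_real (1/n) * f w)"
  have gX: "g \<in> X" unfolding g_def by (rule Xscale[OF f])
  have "nX g = cmod (complex_of_real (1/n)) * nX f" unfolding g_def by (rule nXscale[OF f])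
  then have ng: "nX g = 1" using n by (simp add: n_def norm_divide)
  have Tg: "T g = (\<lambda>w. complex_of_real (1/n) * T f w)" unfolding g_def by (rule T_scale[OF intr XHD[OF f]])
  have "cmod (T g z) \<le> dual_norm X nX (adjoint_op T (point_eval z))"
    using DN_upper[OF gX _ z] ng by simp
  moreover have "cmod (T g z) = cmod (T f z) / n" using n by (simp add: Tg norm_mult norm_divide)
  ultimately show ?thesis using n by (simp add: n_def pos_divide_le_eq)
qed

end

context thm_ctx
begin

lemma ii_i: "compact_op X nX (Hv0 v) (normv v) T \<Longrightarrow> compact_op X nX (Hv v) (normv v) T"
  unfolding compact_op_def Hv0_def by blast

lemma ii_iii:
  assumes co: "compact_op X nX (Hv0 v) (normv v) T"
  shows "tends0_bdry (\<lambda>z. v z * dual_norm X nX (adjoint_op T (point_eval z)))"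
proof (rule ccontr)
  let ?D = "\<lambda>z. dual_norm X nX (adjoint_op T (point_eval z))"
  assume "\<not> tends0_bdry (\<lambda>z. v z * ?D z)"
  then obtain e where e: "e > 0"
    and ne: "\<forall>r<1. \<exists>z. r < cmod z \<and> cmod z < 1 \<and> \<not> \<bar>v z * ?D z\<bar> < e"
    unfolding tends0_bdry_def by blast
  have "\<forall>n. \<exists>z. 1 - inverse (real (Suc n)) < cmod z \<and> cmod z < 1 \<and> e \<le> v z * ?D z"
  proof
    fix n
    have "1 - inverse (real (Suc n)) < 1" by simp
    with ne obtain z where z: "1 - inverse (real (Suc n)) < cmod z" "cmod z < 1" "\<not> \<bar>v z * ?D z\<bar> < e"
      by blast
    have zb: "z \<in> ball 0 1" using z by simp
    have "0 \<le> v z * ?D z" using vpos[OF zb] DN_nonneg[OF zb] by simp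
    with z show "\<exists>z. 1 - inverse (real (Suc n)) < cmod z \<and> cmod z < 1 \<and> e \<le> v z * ?D z"
      by auto
  qed
  then obtain zs where zs: "\<And>n. 1 - inverse (real (Suc n)) < cmod (zs n)"
    "\<And>n. cmod (zs n) < 1" "\<And>n. e \<le> v (zs n) * ?D (zs n)"
    by metis
  have "\<forall>n. \<exists>f. f \<in> X \<and> nX f \<le> 1 \<and> e/2 < v (zs n) * cmod (T f (zs n))"
  proof
    fix n
    have zb: "zs n \<in> ball 0 1" using zs(2)[of n] by simp
    have vz: "v (zs n) > 0" by (rule vpos[OF zb])
    have "e / v (zs n) \<le> ?D (zs n)" using zs(3)[of n] vz by (simp add: pos_divide_le_eq mult.commute)
    moreover have "e / (2 * v (zs n)) < e / v (zs n)" using vz e by (simp add: field_simps)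
    ultimately have "e / (2 * v (zs n)) < ?D (zs n)" by linarith
    from DN_ex[OF zb this] obtain f where f: "f \<in> X" "nX f \<le> 1" "e / (2 * v (zs n)) < cmod (T f (zs n))"
      by blast
    have "e/2 < v (zs n) * cmod (T f (zs n))" using f(3) vz by (simp add: field_simps)
    with f show "\<exists>f. f \<in> X \<and> nX f \<le> 1 \<and> e/2 < v (zs n) * cmod (T f (zs n))" by blast
  qed
  then obtain fs where fs: "\<And>n. fs n \<in> X" "\<And>n. nX (fs n) \<le> 1"
    "\<And>n. e/2 < v (zs n) * cmod (T (fs n) (zs n))"
    by metis
  have coS: "\<forall>fs. (\<forall>n. fs n \<in> X \<and> nX (fs n) \<le> 1) \<longrightarrow>
        (\<exists>(\<sigma>::nat\<Rightarrow>nat) g. strict_mono \<sigma> \<and> g \<in> Hv0 v \<and> (\<lambda>n. normv v (\<lambda>z. T (fs (\<sigma> n)) z - g z)) \<longlonglongrightarrow> 0)"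
    using co unfolding compact_op_def by blast
  from coS fs(1,2) obtain \<sigma> g where sg: "strict_mono \<sigma>" "g \<in> Hv0 v"
    "(\<lambda>n. normv v (\<lambda>z. T (fs (\<sigma> n)) z - g z)) \<longlonglongrightarrow> 0"
    by blast
  have gH: "g \<in> Hv v" using sg(2) by (simp add: Hv0_def)
  have gt: "tends0_bdry (\<lambda>z. v z * cmod (g z))" using sg(2) by (simp add: Hv0_def)
  have e4: "e/4 > 0" using e by simp
  from gt[unfolded tends0_bdry_def, rule_format, OF e4] obtain r
    where r: "r < 1" "\<forall>z. r < cmod z \<and> cmod z < 1 \<longrightarrow> \<bar>v z * cmod (g z)\<bar> < e/4" by blast
  have "0 < 1 - r" using r(1) by simp
  from reals_Archimedean[OF this] obtain N where N: "inverse (real (Suc N)) < 1 - r" by auto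
  from sg(3)[unfolded LIMSEQ_iff, rule_format, OF e4] obtain no
    where no: "\<forall>n\<ge>no. norm (normv v (\<lambda>z. T (fs (\<sigma> n)) z - g z) - 0) < e/4" by blast
  define m where "m = max N no"
  define k where "k = \<sigma> m"
  have km: "m \<le> k" unfolding k_def by (rule seq_suble[OF sg(1)])
  have kN: "N \<le> k" using km by (simp add: m_def)
  have "m \<ge> no" by (simp add: m_def)
  from no[rule_format, OF this] have "\<bar>normv v (\<lambda>z. T (fs k) z - g z)\<bar> < e/4"
    by (simp add: k_def)
  then have nm: "normv v (\<lambda>z. T (fs k) z - g z) < e/4" by linarith
  define z where "z = zs k"
  have zb: "z \<in> ball 0 1" using zs(2)[of k] by (simp add: z_def)
  have iv: "inverse (real (Suc k)) \<le> inverse (real (Suc N))"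
    by (rule le_imp_inverse_le) (use kN in auto)
  have zr: "r < cmod z" using zs(1)[of k] N iv unfolding z_def by linarith
  have "\<bar>v z * cmod (g z)\<bar> < e/4" using r(2) zr zs(2)[of k] unfolding z_def by blast
  then have g4: "v z * cmod (g z) < e/4" by linarith
  have vz0: "0 \<le> v z" using vp zb by blast
  have d: "v z * cmod (T (fs k) z - g z) \<le> normv v (\<lambda>z. T (fs k) z - g z)"
    using Hv_le[OF Hv_diff[OF vp TXHv[OF fs(1)] gH] zb] by simp
  have le: "cmod (T (fs k) z) \<le> cmod (T (fs k) z - g z) + cmod (g z)"
    by (metis add.commute diff_add_cancel norm_triangle_ineq)
  have "v z * cmod (T (fs k) z) \<le> v z * (cmod (T (fs k) z - g z) + cmod (g z))"
    by (rule mult_left_mono[OF le vz0])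
  also have "\<dots> = v z * cmod (T (fs k) z - g z) + v z * cmod (g z)" by (simp add: distrib_left)
  finally have "v z * cmod (T (fs k) z) < e/2" using d nm g4 by linarith
  with fs(3)[of k] show False by (simp add: z_def)
qed

end

context thm_ctx
begin

lemma iii_TXHv0:
  assumes t: "tends0_bdry (\<lambda>z. v z * dual_norm X nX (adjoint_op T (point_eval z)))"
    and f: "f \<in> X"
  shows "T f \<in> Hv0 v"
proof -
  let ?D = "\<lambda>z. dual_norm X nX (adjoint_op T (point_eval z))"
  have "tends0_bdry (\<lambda>z. v z * cmod (T f z))" unfolding tends0_bdry_def
  proof (intro allI impI)
    fix e :: real assume e: "e > 0"
    have B: "nX f + 1 > 0" using nXnn[OF f] by simp
    define e' where "e' = e / (nX f + 1)"
    have e': "e' > 0" using e B by (simp add: e'_def)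
    have ee: "e' * (nX f + 1) = e" using B by (simp add: e'_def)
    from t[unfolded tends0_bdry_def, rule_format, OF e'] obtain r
      where r: "r < 1" "\<forall>z. r < cmod z \<and> cmod z < 1 \<longrightarrow> \<bar>v z * ?D z\<bar> < e'" by blast
    show "\<exists>r<1. \<forall>z. r < cmod z \<and> cmod z < 1 \<longrightarrow> \<bar>v z * cmod (T f z)\<bar> < e"
    proof (intro exI[of _ r] conjI allI impI)
      fix z assume z: "r < cmod z \<and> cmod z < 1"
      then have zb: "z \<in> ball 0 1" by simp
      have vz0: "0 \<le> v z" using vp zb by blast
      have "\<bar>v z * ?D z\<bar> < e'" using r(2) z by blast
      then have a: "v z * ?D z \<le> e'" by linarith
      have "v z * cmod (T f z) \<le> v z * (?D z * nX f)"
        by (rule mult_left_mono[OF DN_est[OF f zb] vz0])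
      also have "\<dots> = (v z * ?D z) * nX f" by (simp add: algebra_simps)
      also have "\<dots> \<le> e' * nX f" by (rule mult_right_mono[OF a nXnn[OF f]])
      also have "\<dots> < e' * (nX f + 1)" using e' by (simp add: algebra_simps)
      finally have "v z * cmod (T f z) < e" using ee by simp
      moreover have "0 \<le> v z * cmod (T f z)" using vz0 by simp
      ultimately show "\<bar>v z * cmod (T f z)\<bar> < e" by simp
    qed (rule r(1))
  qed
  with TXHv[OF f] show ?thesis by (simp add: Hv0_def)
qed

lemma iii_ii:
  assumes t: "tends0_bdry (\<lambda>z. v z * dual_norm X nX (adjoint_op T (point_eval z)))"
  shows "compact_op X nX (Hv0 v) (normv v) T"
  unfolding compact_op_def
proof (intro conjI allI impI ballI)
  let ?D = "\<lambda>z. dual_norm X nX (adjoint_op T (point_eval z))"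
  fix f assume "f \<in> X" then show "T f \<in> Hv0 v" by (rule iii_TXHv0[OF t])
next
  let ?D = "\<lambda>z. dual_norm X nX (adjoint_op T (point_eval z))"
  fix fs :: "nat \<Rightarrow> cfun" assume fs: "\<forall>n. fs n \<in> X \<and> nX (fs n) \<le> 1"
  have iS: "\<forall>fs. (\<forall>n. fs n \<in> X \<and> nX (fs n) \<le> 1) \<longrightarrow>
        (\<exists>(\<sigma>::nat\<Rightarrow>nat) f. strict_mono \<sigma> \<and> f \<in> X \<and> uc_conv (fs \<circ> \<sigma>) f)"
    using init unfolding initial_space_def by blast
  from iS fs obtain \<sigma> :: "nat \<Rightarrow> nat" and f where sf: "strict_mono \<sigma>" "f \<in> X" "uc_conv (fs \<circ> \<sigma>) f" by blast
  have fsX: "\<And>n. fs n \<in> X" and fs1: "\<And>n. nX (fs n) \<le> 1" using fs by auto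
  have ucs: "uc_conv (\<lambda>n. fs (\<sigma> n)) f" using sf(3) by (simp add: o_def)
  have ucT: "uc_conv (\<lambda>n. T (fs (\<sigma> n))) (T f)"
    by (rule T_cont[OF intr XHD[OF fsX] XHD[OF sf(2)] ucs])
  define B where "B = nX f + 1"
  have B: "B > 0" using nXnn[OF sf(2)] by (simp add: B_def)
  have hX: "(\<lambda>z. fs (\<sigma> n) z - f z) \<in> X" for n by (rule Xdiff(1)[OF fsX sf(2)])
  have hB: "nX (\<lambda>z. fs (\<sigma> n) z - f z) \<le> B" for n
    using Xdiff(2)[OF fsX sf(2), of "\<sigma> n"] fs1[of "\<sigma> n"] by (simp add: B_def)
  have Th: "T (\<lambda>z. fs (\<sigma> n) z - f z) = (\<lambda>z. T (fs (\<sigma> n)) z - T f z)" for n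
    by (rule T_diff[OF intr XHD[OF fsX] XHD[OF sf(2)]])
  have dH: "(\<lambda>z. T (fs (\<sigma> n)) z - T f z) \<in> Hv v" for n
    by (rule Hv_diff[OF vp TXHv[OF fsX] TXHv[OF sf(2)]])
  have "(\<lambda>n. normv v (\<lambda>z. T (fs (\<sigma> n)) z - T f z)) \<longlonglongrightarrow> 0"
  proof (rule LIMSEQ_I)
    fix e :: real assume e: "0 < e"
    define e1 where "e1 = e / (2 * B)"
    have e1: "e1 > 0" using e B by (simp add: e1_def)
    have e1B: "e1 * B = e / 2" using B by (simp add: e1_def)
    from t[unfolded tends0_bdry_def, rule_format, OF e1] obtain r
      where r: "r < 1" "\<forall>z. r < cmod z \<and> cmod z < 1 \<longrightarrow> \<bar>v z * ?D z\<bar> < e1" by blast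
    define r' where "r' = max r 0"
    have r'1: "r' < 1" using r(1) by (simp add: r'_def)
    define K where "K = cball (0::complex) r'"
    have K: "compact K \<and> K \<subseteq> ball 0 1" using r'1 by (auto simp: K_def)
    have ul: "uniform_limit K (\<lambda>n. T (fs (\<sigma> n))) (T f) sequentially"
      using ucT K by (simp add: uc_conv_def)
    have e2: "e/2 > 0" using e by simp
    from uniform_limitD[OF ul e2] obtain no
      where no: "\<forall>n\<ge>no. \<forall>x\<in>K. dist (T (fs (\<sigma> n)) x) (T f x) < e/2"
      unfolding eventually_sequentially by blast
    show "\<exists>no. \<forall>n\<ge>no. norm (normv v (\<lambda>z. T (fs (\<sigma> n)) z - T f z) - 0) < e"
    proof (intro exI[of _ no] allI impI)
      fix n assume n: "n \<ge> no"
      have "normv v (\<lambda>z. T (fs (\<sigma> n)) z - T f z) \<le> e/2"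
      proof (rule normv_le)
        fix z :: complex assume zb: "z \<in> ball 0 1"
        have vz0: "0 \<le> v z" using vp zb by blast
        show "v z * cmod (T (fs (\<sigma> n)) z - T f z) \<le> e/2"
        proof (cases "cmod z \<le> r'")
          case True
          then have "z \<in> K" by (simp add: K_def)
          with no n have "dist (T (fs (\<sigma> n)) z) (T f z) < e/2" by blast
          then have c: "cmod (T (fs (\<sigma> n)) z - T f z) < e/2" by (simp add: dist_norm)
          have "v z * cmod (T (fs (\<sigma> n)) z - T f z) \<le> 1 * cmod (T (fs (\<sigma> n)) z - T f z)"
            by (rule mult_right_mono[OF vle1[OF zb] norm_ge_zero])
          with c show ?thesis by simp
        next
          case False
          then have zr: "r < cmod z \<and> cmod z < 1" using zb by (simp add: r'_def)
          have "\<bar>v z * ?D z\<bar> < e1" using r(2) zr by blast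
          then have a: "v z * ?D z \<le> e1" by linarith
          have hn: "0 \<le> nX (\<lambda>z. fs (\<sigma> n) z - f z)" by (rule nXnn[OF hX])
          have "v z * cmod (T (fs (\<sigma> n)) z - T f z) = v z * cmod (T (\<lambda>z. fs (\<sigma> n) z - f z) z)"
            by (simp add: Th)
          also have "\<dots> \<le> v z * (?D z * nX (\<lambda>z. fs (\<sigma> n) z - f z))"
            by (rule mult_left_mono[OF DN_est[OF hX zb] vz0])
          also have "\<dots> = (v z * ?D z) * nX (\<lambda>z. fs (\<sigma> n) z - f z)" by (simp add: algebra_simps)
          also have "\<dots> \<le> e1 * nX (\<lambda>z. fs (\<sigma> n) z - f z)" by (rule mult_right_mono[OF a hn])
          also have "\<dots> \<le> e1 * B" by (rule mult_left_mono[OF hB]) (use e1 in simp)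
          finally show ?thesis using e1B by simp
        qed
      qed
      moreover have "0 \<le> normv v (\<lambda>z. T (fs (\<sigma> n)) z - T f z)" by (rule normv_nonneg[OF vp dH])
      ultimately show "norm (normv v (\<lambda>z. T (fs (\<sigma> n)) z - T f z) - 0) < e" using e by simp
    qed
  qed
  moreover have "T f \<in> Hv0 v" by (rule iii_TXHv0[OF t sf(2)])
  ultimately show "\<exists>(\<sigma>::nat\<Rightarrow>nat) g. strict_mono \<sigma> \<and> g \<in> Hv0 v \<and>
      (\<lambda>n. normv v (\<lambda>z. T (fs (\<sigma> n)) z - g z)) \<longlonglongrightarrow> 0"
    using sf(1) by blast
qed

end

context thm_ctx
begin

lemma i_TXHv0:
  assumes co: "compact_op X nX (Hv v) (normv v) T" and f: "f \<in> X"
  shows "T f \<in> Hv0 v"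
proof -
  have d0: "dil 0 f \<in> X \<and> nX (dil 0 f) \<le> C * nX f" using dilA f by simp
  define a where "a = C * nX f"
  have a0: "0 \<le> a" using nXnn[of "dil 0 f"] d0 by (simp add: a_def)
  define c where "c = 1 / (a + 1)"
  have c0: "c > 0" using a0 by (simp add: c_def)
  have ca: "c * a \<le> 1" using a0 by (simp add: c_def field_simps)
  define rs where "rs n = 1 - inverse (real (Suc (Suc n)))" for n
  have rs01: "0 \<le> rs n \<and> rs n < 1" for n
  proof -
    have "inverse (real (Suc (Suc n))) \<le> 1" by (simp add: inverse_le_1_iff)
    moreover have "inverse (real (Suc (Suc n))) > 0" by simp
    ultimately show ?thesis by (simp add: rs_def)
  qed
  have rslim: "rs \<longlonglongrightarrow> 1"
  proof -
    have "(\<lambda>n. inverse (real (Suc (Suc n)))) \<longlonglongrightarrow> 0"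
      by (rule LIMSEQ_Suc[OF LIMSEQ_inverse_real_of_nat])
    from tendsto_diff[OF tendsto_const this, of 1] show ?thesis
      unfolding rs_def[abs_def] by simp
  qed
  define cc where "cc = complex_of_real c"
  have cc0: "cc \<noteq> 0" using c0 by (simp add: cc_def)
  have ccn: "cmod cc = c" using c0 by (simp add: cc_def)
  define fs where "fs n = (\<lambda>z. cc * dil (rs n) f z)" for n
  have dX: "dil (rs n) f \<in> X" and dn: "nX (dil (rs n) f) \<le> C * nX f" for n
    using dilA f rs01[of n] by auto
  have fsX: "fs n \<in> X" for n unfolding fs_def by (rule Xscale[OF dX])
  have fs1: "nX (fs n) \<le> 1" for n
  proof -
    have "nX (fs n) = c * nX (dil (rs n) f)" unfolding fs_def using nXscale[OF dX] ccn by simp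
    also have "\<dots> \<le> c * a" using dn[of n] c0 by (simp add: a_def)
    finally show ?thesis using ca by simp
  qed
  have iS: "\<forall>fs. (\<forall>n. fs n \<in> X \<and> nX (fs n) \<le> 1) \<longrightarrow>
        (\<exists>(\<sigma>::nat\<Rightarrow>nat) f. strict_mono \<sigma> \<and> f \<in> X \<and> uc_conv (fs \<circ> \<sigma>) f)"
    using init unfolding initial_space_def by blast
  from iS fsX fs1 obtain \<sigma> :: "nat \<Rightarrow> nat" and h where sh: "strict_mono \<sigma>" "h \<in> X" "uc_conv (fs \<circ> \<sigma>) h"
    by blast
  have hform: "h = (\<lambda>z. cc * f z)"
  proof
    fix z
    show "h z = cc * f z"
    proof (cases "cmod z < 1")
      case True
      then have zb: "z \<in> ball 0 1" by simp
      have K: "compact {z} \<and> {z} \<subseteq> ball 0 1" using zb by simp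
      have ul: "uniform_limit {z} (fs \<circ> \<sigma>) h sequentially" using sh(3) K unfolding uc_conv_def by blast
      have l1: "(\<lambda>n. (fs \<circ> \<sigma>) n z) \<longlonglongrightarrow> h z" by (rule tendsto_uniform_limitI[OF ul]) simp
      have eq: "(fs \<circ> \<sigma>) n z = cc * f (complex_of_real (rs (\<sigma> n)) * z)" for n
        using True by (simp add: fs_def dil_def restrictD_def)
      have fhol: "f holomorphic_on ball 0 1" using XHD[OF f] by (simp add: HD_def)
      have cont: "isCont f z"
        using holomorphic_on_imp_continuous_on[OF fhol] zb
        by (simp add: continuous_on_eq_continuous_at)
      have "(\<lambda>n. rs (\<sigma> n)) \<longlonglongrightarrow> 1"
        using LIMSEQ_subseq_LIMSEQ[OF rslim sh(1)] by (simp add: o_def)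
      then have "(\<lambda>n. complex_of_real (rs (\<sigma> n))) \<longlonglongrightarrow> complex_of_real 1"
        by (rule tendsto_of_real)
      then have "(\<lambda>n. complex_of_real (rs (\<sigma> n)) * z) \<longlonglongrightarrow> complex_of_real 1 * z"
        by (rule tendsto_mult[OF _ tendsto_const])
      then have l2: "(\<lambda>n. complex_of_real (rs (\<sigma> n)) * z) \<longlonglongrightarrow> z" by simp
      have l3: "(\<lambda>n. f (complex_of_real (rs (\<sigma> n)) * z)) \<longlonglongrightarrow> f z"
        by (rule isCont_tendsto_compose[OF cont l2])
      have "(\<lambda>n. cc * f (complex_of_real (rs (\<sigma> n)) * z)) \<longlonglongrightarrow> cc * f z"
        by (rule tendsto_mult_left[OF l3])
      then have "(\<lambda>n. (fs \<circ> \<sigma>) n z) \<longlonglongrightarrow> cc * f z" by (simp only: eq)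
      from LIMSEQ_unique[OF l1 this] show ?thesis .
    next
      case False
      have "h z = 0" using XHD[OF sh(2)] False by (simp add: HD_def)
      moreover have "f z = 0" using XHD[OF f] False by (simp add: HD_def)
      ultimately show ?thesis by simp
    qed
  qed
  have fsH: "(fs \<circ> \<sigma>) n \<in> HD" for n using XHD[OF fsX] by simp
  have ucT: "uc_conv (\<lambda>n. T ((fs \<circ> \<sigma>) n)) (T h)"
    by (rule T_cont[OF intr fsH XHD[OF sh(2)] sh(3)])
  have coS: "\<forall>fs. (\<forall>n. fs n \<in> X \<and> nX (fs n) \<le> 1) \<longrightarrow>
        (\<exists>(\<sigma>::nat\<Rightarrow>nat) g. strict_mono \<sigma> \<and> g \<in> Hv v \<and> (\<lambda>n. normv v (\<lambda>z. T (fs (\<sigma> n)) z - g z)) \<longlonglongrightarrow> 0)"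
    using co unfolding compact_op_def by blast
  have fss: "\<forall>n. (fs \<circ> \<sigma>) n \<in> X \<and> nX ((fs \<circ> \<sigma>) n) \<le> 1" using fsX fs1 by simp
  from coS fss obtain \<sigma>2 :: "nat \<Rightarrow> nat" and g where sg: "strict_mono \<sigma>2" "g \<in> Hv v"
    "(\<lambda>n. normv v (\<lambda>z. T ((fs \<circ> \<sigma>) (\<sigma>2 n)) z - g z)) \<longlonglongrightarrow> 0"
    by blast
  have Tfs: "T (fs m) = (\<lambda>z. cc * T (dil (rs m) f) z)" for m
    unfolding fs_def by (rule T_scale[OF intr XHD[OF dX]])
  have GH0: "\<forall>n. T ((fs \<circ> \<sigma>) (\<sigma>2 n)) \<in> Hv0 v"
  proof
    fix n
    have "T (dil (rs (\<sigma> (\<sigma>2 n))) f) \<in> Hv0 v" using dil0 f rs01 by blast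
    from Hv0_scale[OF vp this, of cc] show "T ((fs \<circ> \<sigma>) (\<sigma>2 n)) \<in> Hv0 v" by (simp add: Tfs)
  qed
  have g0: "g \<in> Hv0 v" by (rule Hv0_closed[OF vp GH0 sg(2) sg(3)])
  have GH: "\<forall>n. T ((fs \<circ> \<sigma>) (\<sigma>2 n)) \<in> Hv v" using GH0 by (simp add: Hv0_def)
  have gT: "g = T h"
  proof
    fix z
    show "g z = T h z"
    proof (cases "cmod z < 1")
      case True
      then have zb: "z \<in> ball 0 1" by simp
      have p1: "(\<lambda>n. T ((fs \<circ> \<sigma>) (\<sigma>2 n)) z) \<longlonglongrightarrow> g z"
        by (rule norm_ptwise[OF vp GH sg(2) sg(3) zb vpos[OF zb]])
      have K: "compact {z} \<and> {z} \<subseteq> ball 0 1" using zb by simp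
      have ul: "uniform_limit {z} (\<lambda>n. T ((fs \<circ> \<sigma>) n)) (T h) sequentially"
        using ucT K unfolding uc_conv_def by blast
      have p2: "(\<lambda>n. T ((fs \<circ> \<sigma>) n) z) \<longlonglongrightarrow> T h z" by (rule tendsto_uniform_limitI[OF ul]) simp
      have "((\<lambda>n. T ((fs \<circ> \<sigma>) n) z) \<circ> \<sigma>2) \<longlonglongrightarrow> T h z" by (rule LIMSEQ_subseq_LIMSEQ[OF p2 sg(1)])
      then have p3: "(\<lambda>n. T ((fs \<circ> \<sigma>) (\<sigma>2 n)) z) \<longlonglongrightarrow> T h z" by (simp add: o_def)
      from LIMSEQ_unique[OF p1 p3] show ?thesis .
    next
      case False
      have "g z = 0" using sg(2) False by (simp add: Hv_def HD_def)
      moreover have "T h z = 0" using T_in[OF intr XHD[OF sh(2)]] False by (simp add: HD_def)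
      ultimately show ?thesis by simp
    qed
  qed
  have Th: "T h = (\<lambda>z. cc * T f z)" unfolding hform by (rule T_scale[OF intr XHD[OF f]])
  have "(\<lambda>z. cc * T f z) \<in> Hv0 v" using g0 gT Th by simp
  from Hv0_scale[OF vp this, of "inverse cc"]
  have "(\<lambda>z. inverse cc * (cc * T f z)) \<in> Hv0 v" .
  moreover have "(\<lambda>z. inverse cc * (cc * T f z)) = T f" using cc0 by (simp add: field_simps)
  ultimately show ?thesis by simp
qed

lemma i_ii:
  assumes co: "compact_op X nX (Hv v) (normv v) T"
  shows "compact_op X nX (Hv0 v) (normv v) T"
  unfolding compact_op_def
proof (intro conjI allI impI ballI)
  fix f assume "f \<in> X" then show "T f \<in> Hv0 v" by (rule i_TXHv0[OF co])
next
  fix fs :: "nat \<Rightarrow> cfun" assume fs: "\<forall>n. fs n \<in> X \<and> nX (fs n) \<le> 1"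
  have coS: "\<forall>fs. (\<forall>n. fs n \<in> X \<and> nX (fs n) \<le> 1) \<longrightarrow>
        (\<exists>(\<sigma>::nat\<Rightarrow>nat) g. strict_mono \<sigma> \<and> g \<in> Hv v \<and> (\<lambda>n. normv v (\<lambda>z. T (fs (\<sigma> n)) z - g z)) \<longlonglongrightarrow> 0)"
    using co unfolding compact_op_def by blast
  from coS fs obtain \<sigma> :: "nat \<Rightarrow> nat" and g where sg: "strict_mono \<sigma>" "g \<in> Hv v"
    "(\<lambda>n. normv v (\<lambda>z. T (fs (\<sigma> n)) z - g z)) \<longlonglongrightarrow> 0"
    by blast
  have F: "\<forall>n. T (fs (\<sigma> n)) \<in> Hv0 v" using fs i_TXHv0[OF co] by blast
  have "g \<in> Hv0 v" by (rule Hv0_closed[OF vp F sg(2) sg(3)])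
  with sg show "\<exists>(\<sigma>::nat\<Rightarrow>nat) g. strict_mono \<sigma> \<and> g \<in> Hv0 v \<and>
      (\<lambda>n. normv v (\<lambda>z. T (fs (\<sigma> n)) z - g z)) \<longlonglongrightarrow> 0" by blast
qed

end

theorem theorem3p4:
  fixes v :: "complex \<Rightarrow> real" and X :: "cfun set" and nX :: "cfun \<Rightarrow> real"
    and T :: "cfun \<Rightarrow> cfun" and C :: real
  assumes "typical_weight v"
    and "initial_space X nX"
    and "\<forall>f\<in>X. \<forall>r. 0 \<le> r \<and> r < 1 \<longrightarrow> dil r f \<in> X \<and> nX (dil r f) \<le> C * nX f"
    and "intrinsic T"
    and "bounded_op X nX (Hv v) (normv v) T"
    and "\<forall>f\<in>X. \<forall>r. 0 \<le> r \<and> r < 1 \<longrightarrow> T (dil r f) \<in> Hv0 v"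
  shows "(compact_op X nX (Hv v) (normv v) T \<longleftrightarrow> compact_op X nX (Hv0 v) (normv v) T)
       \<and> (compact_op X nX (Hv0 v) (normv v) T \<longleftrightarrow>
          tends0_bdry (\<lambda>z. v z * dual_norm X nX (adjoint_op T (point_eval z))))"
proof -
  interpret thm_ctx v X nX T C using assms by (simp add: thm_ctx_def)
  show ?thesis using i_ii ii_i ii_iii iii_ii by blast
qed

end
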